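(* Let $p\ge1$ and $\phi\in GL(n)$, and let $\gamma_\phi(x)=e^{-\|\phi x\|^2/2}$. Then $E_p(\gamma_\phi)=\gamma_\phi$.
   Context: For a convex $u$, $u^*(y)=\sup_x\{\langle x,y\rangle-u(x)\}$. For $f=e^{-u}$ with $u$ convex, $u\ge0$, $u^{**}=u$, $u(0)=0$, $u(x)\to\infty$ as $|x|\to\infty$: $h_f=u^*$; $J(f)=\int f\,dx$; $J(f^\diamond)=\int(nf+f\log f)\,dx$; $\mu_p(f,\cdot)$ defined by $\int g\,d\mu_p(f,\cdot)=\int_{\mathrm{dom}(u)}g(\nabla u(x))h_f(\nabla u(x))^{1-p}f(x)\,dx$; $\delta J_p(f,g)=\frac1p\int h_g^p\,d\mu_p(f,\cdot)$; $\overline\delta J_p(f,g)=(p\,\delta J_p(f,g)/J(f^\diamond))^{1/p}$. The $L_p$ John ellipsoid $E_pf$ of $f$ is the unique Gaussian function $\gamma_\psi$ ($\psi\in GL(n)$) that maximizes $J(\gamma_\psi)$ subject to $\overline\delta J_p(f,\gamma_\psi)\le1$. *)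

theory Defs
  imports "HOL-Analysis.Analysis"
begin

text \<open>Functions f = e^{-u} on R^n, R^n rendered as real^'n. The potential is
  u = - ln f on the support {x. f x > 0} = dom(u) (u = +infinity off the support).\<close>

definition gauss :: "real^'n^'n \<Rightarrow> real^'n \<Rightarrow> real" where
  "gauss \<phi> x = exp (- (norm (\<phi> *v x))\<^sup>2 / 2)"

definition pot :: "(real^'n \<Rightarrow> real) \<Rightarrow> real^'n \<Rightarrow> real" where
  "pot f x = - ln (f x)"

definition domf :: "(real^'n \<Rightarrow> real) \<Rightarrow> (real^'n) set" where
  "domf f = {x. 0 < f x}"

text \<open>support function h_f = u^*, the Legendre transform of u\<close>
definition supp_fun :: "(real^'n \<Rightarrow> real) \<Rightarrow> real^'n \<Rightarrow> real" where
  "supp_fun f y = (SUP x\<in>domf f. inner x y - pot f x)"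

text \<open>gradient of u at x\<close>
definition grad_pot :: "(real^'n \<Rightarrow> real) \<Rightarrow> real^'n \<Rightarrow> real^'n" where
  "grad_pot f x = (THE D. GDERIV (pot f) x :> D)"

text \<open>J(f) = integral of f\<close>
definition Jf :: "(real^'n \<Rightarrow> real) \<Rightarrow> real" where
  "Jf f = (LINT x|lborel. f x)"

text \<open>J(f^diamond) = integral of (n f + f log f)\<close>
definition Jdiamond :: "(real^'n \<Rightarrow> real) \<Rightarrow> real" where
  "Jdiamond f = (LINT x|lborel. real CARD('n) * f x + f x * ln (f x))"

text \<open>integral of g against the L_p surface area measure mu_p(f,.)\<close>
definition mu_int :: "real \<Rightarrow> (real^'n \<Rightarrow> real) \<Rightarrow> (real^'n \<Rightarrow> real) \<Rightarrow> real" where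
  "mu_int p f g = (LINT x:domf f|lborel.
      g (grad_pot f x) * (supp_fun f (grad_pot f x)) powr (1 - p) * f x)"

definition deltaJ :: "real \<Rightarrow> (real^'n \<Rightarrow> real) \<Rightarrow> (real^'n \<Rightarrow> real) \<Rightarrow> real" where
  "deltaJ p f g = (1 / p) * mu_int p f (\<lambda>y. (supp_fun g y) powr p)"

definition deltaJ_bar :: "real \<Rightarrow> (real^'n \<Rightarrow> real) \<Rightarrow> (real^'n \<Rightarrow> real) \<Rightarrow> real" where
  "deltaJ_bar p f g = (p * deltaJ p f g / Jdiamond f) powr (1 / p)"

text \<open>L_p John ellipsoid: the unique Gaussian gamma_psi (psi in GL(n)) maximizing
  J(gamma_psi) subject to deltaJ_bar p f gamma_psi \<le> 1.\<close>
definition john_Lp :: "real \<Rightarrow> (real^'n \<Rightarrow> real) \<Rightarrow> (real^'n \<Rightarrow> real)" where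
  "john_Lp p f = (THE g. (\<exists>\<psi>. invertible \<psi> \<and> g = gauss \<psi>)
      \<and> deltaJ_bar p f g \<le> 1
      \<and> (\<forall>\<psi>. invertible \<psi> \<and> deltaJ_bar p f (gauss \<psi>) \<le> 1 \<longrightarrow> Jf (gauss \<psi>) \<le> Jf g))"

end

theory Submission
  imports Defs "HOL-Probability.Distributions"
begin

(* part A *)


typedef 'a wo = "UNIV :: 'a set" by auto

instance wo :: (finite) finite
proof
  have "UNIV = Abs_wo ` UNIV" by (metis Rep_wo_inverse surj_def)
  then show "finite (UNIV :: 'a wo set)" by (metis finite_imageI finite)
qed

instantiation wo :: (finite) wellorder
begin
definition "less_eq_wo (x::'a wo) (y::'a wo) = (to_nat (Rep_wo x) \<le> to_nat (Rep_wo y))"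
definition "less_wo (x::'a wo) (y::'a wo) = (to_nat (Rep_wo x) < to_nat (Rep_wo y))"
instance
proof
  fix x y z :: "'a wo"
  show "(x < y) = (x \<le> y \<and> \<not> y \<le> x)" by (auto simp: less_eq_wo_def less_wo_def)
  show "x \<le> x" by (simp add: less_eq_wo_def)
  show "x \<le> y \<Longrightarrow> y \<le> z \<Longrightarrow> x \<le> z" by (simp add: less_eq_wo_def)
  show "x \<le> y \<Longrightarrow> y \<le> x \<Longrightarrow> x = y"
    by (simp add: less_eq_wo_def Rep_wo_inject)
  show "x \<le> y \<or> y \<le> x" by (auto simp: less_eq_wo_def)
next
  fix P :: "'a wo \<Rightarrow> bool" and a
  assume H: "\<And>x. (\<And>y. y < x \<Longrightarrow> P y) \<Longrightarrow> P x"
  show "P a"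
    by (induct a rule: measure_induct_rule[where f="\<lambda>x. to_nat (Rep_wo x)"]) (metis H less_wo_def)
qed
end

lemma cov_wo:
  fixes A :: "real^('m::{finite,wellorder})^('m::_)" and g :: "real^('m::_) \<Rightarrow> real"
  assumes inv: "invertible A" and g[measurable]: "g \<in> borel_measurable borel"
  shows "integrable lborel (\<lambda>x. g (A *v x)) \<longleftrightarrow> integrable lborel g"
    and "(LINT x|lborel. g (A *v x)) = (LINT y|lborel. g y) / \<bar>det A\<bar>"
proof -
  have lin: "linear ((*v) A)" by (rule matrix_vector_mul_linear)
  have mA: "matrix ((*v) A) = A" by (rule matrix_of_matrix_vector_mul)
  have dnz: "det A \<noteq> 0" using inv invertible_det_nz by blast
  obtain B where B: "A ** B = mat 1" "B ** A = mat 1" using inv unfolding invertible_def by blast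
  have surj: "(*v) A ` UNIV = UNIV"
  proof -
    have "y = A *v (B *v y)" for y by (simp add: matrix_vector_mul_assoc B)
    then show ?thesis by blast
  qed
  have Am[measurable]: "(\<lambda>x. A *v x) \<in> borel_measurable borel"
    by (intro borel_measurable_continuous_onI linear_continuous_on) (simp add: lin linear_linear)
  have gA[measurable]: "(\<lambda>x. g (A *v x)) \<in> borel_measurable borel" by measurable
  have eqi: "integrable lebesgue h \<longleftrightarrow> integrable lborel h" if "h \<in> borel_measurable borel" for h :: "real^('m::_) \<Rightarrow> real"
    using integrable_completion[of h lborel] that by simp
  have eqI: "integral\<^sup>L lebesgue h = integral\<^sup>L lborel h" if "h \<in> borel_measurable borel" for h :: "real^('m::_) \<Rightarrow> real"
    using integral_completion[of h lborel] that by simp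
  have ai: "h absolutely_integrable_on UNIV \<longleftrightarrow> integrable lborel h" if "h \<in> borel_measurable borel" for h :: "real^('m::_) \<Rightarrow> real"
    using eqi[OF that] by (simp add: absolutely_integrable_on_def set_integrable_def)
  have cov: "(\<lambda>x. \<bar>det (matrix ((*v) A))\<bar> * g (A *v x)) absolutely_integrable_on UNIV \<and>
           integral UNIV (\<lambda>x. \<bar>det (matrix ((*v) A))\<bar> * g (A *v x)) = b \<longleftrightarrow>
         g absolutely_integrable_on UNIV \<and> integral UNIV g = b" for b
    by (rule cov_invertible_real[where g'="\<lambda>_. (*v) A" and h="(*v) B" and h'="\<lambda>_. (*v) B"])
       (auto simp: linear_imp_has_derivative lin matrix_vector_mul_assoc B fun_eq_iff)
  have cov': "(\<lambda>x. \<bar>det A\<bar> * g (A *v x)) absolutely_integrable_on UNIV \<and>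
           integral UNIV (\<lambda>x. \<bar>det A\<bar> * g (A *v x)) = b \<longleftrightarrow>
         g absolutely_integrable_on UNIV \<and> integral UNIV g = b" for b
    using cov[of b] mA by simp
  have "(\<lambda>x. \<bar>det A\<bar> * g (A *v x)) absolutely_integrable_on UNIV \<longleftrightarrow> g absolutely_integrable_on UNIV"
    using cov' by blast
  moreover have "(\<lambda>x. \<bar>det A\<bar> * g (A *v x)) absolutely_integrable_on UNIV \<longleftrightarrow> (\<lambda>x. g (A *v x)) absolutely_integrable_on UNIV"
    using dnz absolutely_integrable_on_scaleR_iff[where c="\<bar>det A\<bar>" and f="\<lambda>x. g (A *v x)" and S=UNIV] by simp
  ultimately show I: "integrable lborel (\<lambda>x. g (A *v x)) \<longleftrightarrow> integrable lborel g"
    using ai[OF g] ai[OF gA] by simp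
  show "(LINT x|lborel. g (A *v x)) = (LINT y|lborel. g y) / \<bar>det A\<bar>"
  proof (cases "integrable lborel g")
    case True
    then have "g absolutely_integrable_on UNIV" using ai[OF g] by simp
    then have "integral UNIV g = integral UNIV (\<lambda>x. \<bar>det A\<bar> * g (A *v x))"
      using cov' by blast
    also have "\<dots> = \<bar>det A\<bar> * integral UNIV (g \<circ> (*v) A)" by (simp add: o_def)
    finally have "integral UNIV g = \<bar>det A\<bar> * integral UNIV (g \<circ> (*v) A)" .
    moreover have "integral UNIV g = (LINT y|lborel. g y)" using True by (simp add: integral_lborel)
    moreover have "integral UNIV (g \<circ> (*v) A) = (LINT x|lborel. g (A *v x))"
      using True I by (simp add: integral_lborel o_def)
    ultimately show ?thesis using dnz by (simp add: field_simps)
  next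
    case False
    then show ?thesis using I by (simp add: not_integrable_integral_eq)
  qed
qed


(* part B *)


definition Tr :: "real^'n \<Rightarrow> real^'n wo" where "Tr x = (\<chi> i. x $ Rep_wo i)"
definition Ti :: "real^'n wo \<Rightarrow> real^'n" where "Ti y = (\<chi> j. y $ Abs_wo j)"
definition Mr :: "real^'n^'n \<Rightarrow> real^'n wo^'n wo" where "Mr A = (\<chi> i j. A $ Rep_wo i $ Rep_wo j)"

lemma bij_Rep_wo: "bij_betw Rep_wo UNIV UNIV"
  by (metis Rep_wo_inverse Abs_wo_inverse UNIV_I bij_betw_byWitness subsetI)

lemma sum_Rep_wo: "(\<Sum>j\<in>UNIV. f (Rep_wo j)) = (\<Sum>k\<in>UNIV. f k)"
  using sum.reindex_bij_betw[OF bij_Rep_wo, of f] by simp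

lemma prod_Rep_wo: "(\<Prod>j\<in>UNIV. f (Rep_wo j)) = (\<Prod>k\<in>UNIV. f k)"
  using prod.reindex_bij_betw[OF bij_Rep_wo, of f] by simp

lemma Ti_Tr[simp]: "Ti (Tr x) = x" by (simp add: Ti_def Tr_def Abs_wo_inverse vec_eq_iff)
lemma Tr_Ti[simp]: "Tr (Ti y) = y" by (simp add: Ti_def Tr_def Rep_wo_inverse vec_eq_iff)

lemma Tr_mult: "Tr (A *v x) = Mr A *v Tr x"
  by (simp add: Tr_def Mr_def vec_eq_iff matrix_vector_mult_def sum_Rep_wo[of "\<lambda>k. _ $ k * x $ k"])

lemma Mr_mult: "Mr (A ** B) = Mr A ** Mr B"
  by (simp add: Mr_def vec_eq_iff matrix_matrix_mult_def sum_Rep_wo[of "\<lambda>k. _ $ k * B $ k $ _"])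

lemma Mr_transpose: "Mr (transpose A) = transpose (Mr A)"
  by (simp add: Mr_def vec_eq_iff transpose_def)

lemma Mr_one: "Mr (mat 1) = mat 1"
  by (simp add: Mr_def vec_eq_iff mat_def Rep_wo_inject)

lemma Mr_invertible: "invertible A \<Longrightarrow> invertible (Mr A)"
  unfolding invertible_def by (metis Mr_mult Mr_one)

lemma prod_Basis_cart: "(\<Prod>b\<in>(Basis::(real^'n) set). f b) = (\<Prod>i\<in>UNIV. f (axis i 1))"
proof -
  have "(Basis::(real^'n) set) = (\<lambda>i. axis i 1) ` UNIV" by (auto simp: Basis_vec_def)
  moreover have "inj (\<lambda>i::'n. axis i (1::real))" by (auto simp: inj_def axis_eq_axis)
  ultimately show ?thesis using prod.reindex[of "\<lambda>i. axis i 1" UNIV f] by (simp add: o_def)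
qed

lemma Tr_measurable[measurable]: "Tr \<in> borel_measurable borel"
proof -
  have "linear Tr" by (auto simp: linear_iff Tr_def vec_eq_iff)
  then show ?thesis by (intro borel_measurable_continuous_onI linear_continuous_on) (simp add: linear_linear)
qed

lemma Ti_measurable[measurable]: "Ti \<in> borel_measurable borel"
proof -
  have "linear Ti" by (auto simp: linear_iff Ti_def vec_eq_iff)
  then show ?thesis by (intro borel_measurable_continuous_onI linear_continuous_on) (simp add: linear_linear)
qed

lemma distr_Tr: "distr lborel lborel Tr = (lborel :: (real^('n::finite) wo) measure)"
proof (rule lborel_eqI[symmetric])
  fix l u :: "real^'n wo"
  assume le: "\<And>b. b \<in> Basis \<Longrightarrow> l \<bullet> b \<le> u \<bullet> b"
  have le': "l $ i \<le> u $ i" for i using le[of "axis i 1"] by (auto simp: Basis_vec_def inner_axis) 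
  have pre: "Tr -` box l u = box (Ti l) (Ti u)"
  proof -
    have "x \<in> Tr -` box l u \<longleftrightarrow> x \<in> box (Ti l) (Ti u)" for x
      unfolding mem_box_cart Tr_def Ti_def vimage_def
      by (auto simp: Abs_wo_inverse) (metis Abs_wo_inverse Rep_wo_inverse UNIV_I)+
    then show ?thesis by blast
  qed
  have "emeasure (distr lborel lborel Tr) (box l u) = emeasure lborel (box (Ti l) (Ti u))"
    by (simp add: emeasure_distr pre)
  also have "\<dots> = (\<Prod>b\<in>Basis. (Ti u - Ti l) \<bullet> b)"
    by (rule emeasure_lborel_box) (auto simp: Basis_vec_def inner_axis Ti_def le')
  also have "\<dots> = (\<Prod>i\<in>UNIV. (u - l) $ Abs_wo i)"
    by (simp add: prod_Basis_cart inner_axis Ti_def)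
  also have "\<dots> = (\<Prod>b\<in>Basis. (u - l) \<bullet> b)"
    using prod_Rep_wo[of "\<lambda>k. (u - l) $ Abs_wo k"] by (simp add: prod_Basis_cart inner_axis Rep_wo_inverse)
  finally show "emeasure (distr lborel lborel Tr) (box l u) = (\<Prod>b\<in>Basis. (u - l) \<bullet> b)" .
qed simp


lemma Ti_mult: "A *v Ti y = Ti (Mr A *v y)"
  by (metis Ti_Tr Tr_Ti Tr_mult)

lemma transfer_lborel:
  fixes h :: "real^'n \<Rightarrow> real"
  assumes [measurable]: "h \<in> borel_measurable borel"
  shows "integrable lborel (\<lambda>y. h (Ti y)) \<longleftrightarrow> integrable lborel h"
    and "(LINT y|lborel. h (Ti y)) = (LINT x|lborel. h x)"
proof -
  have "integrable (distr lborel lborel Tr) (\<lambda>y. h (Ti y)) \<longleftrightarrow> integrable lborel (\<lambda>x. h (Ti (Tr x)))"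
    by (rule integrable_distr_eq) auto
  then show "integrable lborel (\<lambda>y. h (Ti y)) \<longleftrightarrow> integrable lborel h" by (simp add: distr_Tr)
  have "integral\<^sup>L (distr lborel lborel Tr) (\<lambda>y. h (Ti y)) = (LINT x|lborel. h (Ti (Tr x)))"
    by (rule integral_distr) auto
  then show "(LINT y|lborel. h (Ti y)) = (LINT x|lborel. h x)" by (simp add: distr_Tr)
qed

lemma cov:
  fixes A :: "real^'n^'n" and g :: "real^'n \<Rightarrow> real"
  assumes inv: "invertible A" and g[measurable]: "g \<in> borel_measurable borel"
  shows "integrable lborel (\<lambda>x. g (A *v x)) \<longleftrightarrow> integrable lborel g"
    and "(LINT x|lborel. g (A *v x)) = (LINT y|lborel. g y) / \<bar>det (Mr A)\<bar>"
proof -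
  have Am[measurable]: "(\<lambda>x. A *v x) \<in> borel_measurable borel"
    by (intro borel_measurable_continuous_onI linear_continuous_on) (simp add: linear_linear)
  have gA[measurable]: "(\<lambda>x. g (A *v x)) \<in> borel_measurable borel" by measurable
  have gT[measurable]: "(\<lambda>x. g (Ti x)) \<in> borel_measurable borel" by measurable
  have iM: "invertible (Mr A)" using inv by (rule Mr_invertible)
  have e1: "(\<lambda>y. g (A *v Ti y)) = (\<lambda>y. (\<lambda>z. g (Ti z)) (Mr A *v y))" by (simp add: Ti_mult)
  show "integrable lborel (\<lambda>x. g (A *v x)) \<longleftrightarrow> integrable lborel g"
    using transfer_lborel(1)[OF gA] transfer_lborel(1)[OF g] cov_wo(1)[OF iM gT] e1 by simp
  show "(LINT x|lborel. g (A *v x)) = (LINT y|lborel. g y) / \<bar>det (Mr A)\<bar>"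
    using transfer_lborel(2)[OF gA] transfer_lborel(2)[OF g] cov_wo(2)[OF iM gT] e1 by simp
qed


(* part C *)


definition ee :: "real^'n \<Rightarrow> real" where "ee y = exp (- (norm y)\<^sup>2 / 2)"

lemma ee_pos: "0 < ee y" by (simp add: ee_def)

lemma ee_measurable[measurable]: "ee \<in> borel_measurable borel"
  unfolding ee_def by measurable

lemma cont_ee: "continuous_on UNIV ee"
  unfolding ee_def by (intro continuous_intros) auto

lemma ee_prod: "ee (x::real^'n) = (\<Prod>b\<in>Basis. exp (- (x \<bullet> b)\<^sup>2 / 2))"
proof -
  have "(norm x)\<^sup>2 = (\<Sum>b\<in>Basis. (x \<bullet> b)\<^sup>2)"
    unfolding power2_norm_eq_inner by (simp add: euclidean_inner[of x x] power2_eq_square)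
  then have "- (norm x)\<^sup>2 / 2 = (\<Sum>b\<in>Basis. - (x \<bullet> b)\<^sup>2 / 2)"
    by (simp add: sum_divide_distrib sum_negf)
  then show ?thesis by (simp add: ee_def exp_sum)
qed

lemma one_dim: "has_bochner_integral lborel (\<lambda>t::real. exp (- t\<^sup>2 / 2)) (sqrt (2 * pi))"
proof -
  have "has_bochner_integral lborel (\<lambda>x. std_normal_density x * x ^ (2 * 0)) (fact (2 * 0) / (2^0 * fact 0))"
    by (rule std_normal_moment_even)
  then have "has_bochner_integral lborel (\<lambda>x. std_normal_density x) 1" by simp
  then have "has_bochner_integral lborel (\<lambda>x. sqrt (2 * pi) * std_normal_density x) (sqrt (2 * pi) * 1)"
    by (rule has_bochner_integral_mult_right)
  moreover have "(\<lambda>x. sqrt (2 * pi) * std_normal_density x) = (\<lambda>t::real. exp (- t\<^sup>2 / 2))"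
    by (simp add: std_normal_density_def fun_eq_iff)
  ultimately show ?thesis by simp
qed

lemma nn_ee: "(\<integral>\<^sup>+x. ennreal (ee (x::real^'n)) \<partial>lborel) = ennreal (sqrt (2 * pi) ^ CARD('n))"
proof -
  have 1: "(\<integral>\<^sup>+t. ennreal (exp (- t\<^sup>2 / 2)) \<partial>lborel) = ennreal (sqrt (2 * pi))"
    using one_dim by (simp add: nn_integral_eq_integral has_bochner_integral_iff)
  have "(\<integral>\<^sup>+x. ennreal (ee (x::real^'n)) \<partial>lborel) = (\<integral>\<^sup>+x. (\<Prod>b\<in>Basis. ennreal (exp (- ((x::real^'n) \<bullet> b)\<^sup>2 / 2))) \<partial>lborel)"
    by (intro nn_integral_cong) (simp add: ee_prod prod_ennreal)
  also have "\<dots> = (\<Prod>b\<in>(Basis::(real^'n) set). (\<integral>\<^sup>+t. ennreal (exp (- t\<^sup>2 / 2)) \<partial>lborel))"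
    by (rule nn_integral_lborel_prod) auto
  also have "\<dots> = ennreal (sqrt (2 * pi)) ^ CARD('n)"
    using 1 by (simp add: prod_Basis_cart)
  finally show ?thesis by (simp add: ennreal_power)
qed

lemma ee_integrable: "integrable lborel (ee :: real^'n \<Rightarrow> real)"
  using nn_ee[where 'n='n] ee_pos
  by (intro integrableI_nonneg) (auto intro: less_imp_le)

lemma ee_integral: "(LINT x|lborel. ee (x::real^'n)) = sqrt (2 * pi) ^ CARD('n)"
proof -
  have "ennreal (LINT x|lborel. ee (x::real^'n)) = ennreal (sqrt (2 * pi) ^ CARD('n))"
    using nn_ee[where 'n='n] ee_integrable[where 'n='n] ee_pos
    by (subst nn_integral_eq_integral[symmetric]) (auto intro: less_imp_le)
  then show ?thesis by (subst (asm) ennreal_inj) (auto intro: integral_nonneg_AE less_imp_le ee_pos)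
qed


lemma Mr_scal: "Mr (c *\<^sub>R mat 1) = c *\<^sub>R mat 1"
  by (simp add: Mr_def vec_eq_iff mat_def Rep_wo_inject)

lemma det_scal: "det (c *\<^sub>R mat 1 :: real^'m^'m) = c ^ CARD('m)"
  by (subst det_diagonal) (simp_all add: mat_def)

lemma card_wo: "CARD('n wo) = CARD('n)"
  using bij_betw_same_card[OF bij_Rep_wo] by simp

lemma inv_scal: "c \<noteq> 0 \<Longrightarrow> invertible (c *\<^sub>R (mat 1 :: real^'n^'n))"
  by (rule scalar_invertible) (auto simp: invertible_def)

lemma det_Mr_scal: "det (Mr (c *\<^sub>R mat 1 :: real^'n^'n)) = c ^ CARD('n)"
  by (simp add: Mr_scal det_scal card_wo)

lemma quad_bound: "(norm y)\<^sup>2 / 2 * ee y \<le> 2 * ee ((1 / sqrt 2) *\<^sub>R y)"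
proof -
  define s where "s = (norm y)\<^sup>2 / 4"
  have s0: "0 \<le> s" by (simp add: s_def)
  have "s \<le> exp s" using exp_ge_add_one_self[of s] by linarith
  then have "s * exp (-s) \<le> exp s * exp (-s)" by (intro mult_right_mono) auto
  then have 1: "s * exp (-s) \<le> 1" by (simp add: exp_minus_inverse)
  have e2: "ee y = exp (-s) * exp (-s)"
    unfolding ee_def s_def by (subst mult_exp_exp) simp
  have "(norm y)\<^sup>2 / 2 * ee y = 2 * (s * exp (-s)) * exp (-s)"
    by (simp add: e2 s_def)
  also have "\<dots> \<le> 2 * 1 * exp (-s)" using 1 by (intro mult_right_mono mult_left_mono) auto
  also have "\<dots> = 2 * ee ((1 / sqrt 2) *\<^sub>R y)"
    by (simp add: ee_def s_def power_mult_distrib real_sqrt_divide power_divide)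
  finally show ?thesis .
qed

lemma quad_integrable: "integrable lborel (\<lambda>y::real^'n. (norm y)\<^sup>2 / 2 * ee y)"
proof -
  have inv: "invertible ((1 / sqrt 2) *\<^sub>R (mat 1 :: real^'n^'n))" by (rule inv_scal) simp
  have "integrable lborel (\<lambda>y::real^'n. ee (((1 / sqrt 2) *\<^sub>R mat 1) *v y))"
    using cov(1)[OF inv ee_measurable] ee_integrable by simp
  then have "integrable lborel (\<lambda>y::real^'n. 2 * ee ((1 / sqrt 2) *\<^sub>R y))"
    by (simp add: scaleR_matrix_vector_assoc[symmetric])
  then show ?thesis
  proof (rule Bochner_Integration.integrable_bound)
    show "AE x in lborel. norm ((norm x)\<^sup>2 / 2 * ee x) \<le> norm (2 * ee ((1 / sqrt 2) *\<^sub>R (x::real^'n)))"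
    proof (rule AE_I2)
      fix x :: "real^'n"
      have a: "0 \<le> (norm x)\<^sup>2 / 2 * ee x" by (simp add: ee_pos less_imp_le)
      have b: "0 \<le> 2 * ee ((1 / sqrt 2) *\<^sub>R x)" by (simp add: ee_pos less_imp_le)
      show "norm ((norm x)\<^sup>2 / 2 * ee x) \<le> norm (2 * ee ((1 / sqrt 2) *\<^sub>R (x::real^'n)))"
        unfolding real_norm_def abs_of_nonneg[OF a] abs_of_nonneg[OF b] by (rule quad_bound)
    qed
  qed simp
qed

lemma quad_bounded_integrable:
  fixes h :: "real^'n \<Rightarrow> real"
  assumes [measurable]: "h \<in> borel_measurable borel" and b: "\<And>y. \<bar>h y\<bar> \<le> C * ((norm y)\<^sup>2 / 2 * ee y)"
  shows "integrable lborel h"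
proof -
  have "integrable lborel (\<lambda>y::real^'n. C * ((norm y)\<^sup>2 / 2 * ee y))"
    by (rule integrable_mult_right[OF quad_integrable])
  then show ?thesis
  proof (rule Bochner_Integration.integrable_bound)
    show "AE x in lborel. norm (h x) \<le> norm (C * ((norm x)\<^sup>2 / 2 * ee x))"
      using b by (intro AE_I2) (smt (verit) real_norm_def)
  qed simp
qed

lemma scal_integral:
  assumes "0 < s"
  shows "(LINT y|lborel. exp (- s * ((norm (y::real^'n))\<^sup>2 / 2))) = (LINT y|lborel. ee (y::real^'n)) / sqrt s ^ CARD('n)"
proof -
  have inv: "invertible (sqrt s *\<^sub>R (mat 1 :: real^'n^'n))" by (rule inv_scal) (use assms in simp)
  have "(LINT y|lborel. ee ((sqrt s *\<^sub>R (mat 1 :: real^'n^'n)) *v y)) = (LINT y|lborel. ee (y::real^'n)) / \<bar>det (Mr (sqrt s *\<^sub>R (mat 1 :: real^'n^'n)))\<bar>"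
    by (rule cov(2)[OF inv ee_measurable])
  moreover have "ee ((sqrt s *\<^sub>R (mat 1 :: real^'n^'n)) *v y) = exp (- s * ((norm (y::real^'n))\<^sup>2 / 2))" for y
    using assms by (simp add: scaleR_matrix_vector_assoc[symmetric] ee_def power_mult_distrib)
  ultimately show ?thesis using assms by (simp add: det_Mr_scal)
qed

lemma scal_integrable:
  assumes "0 < s"
  shows "integrable lborel (\<lambda>y::real^'n. exp (- s * ((norm y)\<^sup>2 / 2)))"
proof -
  have inv: "invertible (sqrt s *\<^sub>R (mat 1 :: real^'n^'n))" by (rule inv_scal) (use assms in simp)
  have "integrable lborel (\<lambda>y. ee ((sqrt s *\<^sub>R (mat 1 :: real^'n^'n)) *v y))"
    using cov(1)[OF inv ee_measurable] ee_integrable by simp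
  moreover have "ee ((sqrt s *\<^sub>R (mat 1 :: real^'n^'n)) *v y) = exp (- s * ((norm (y::real^'n))\<^sup>2 / 2))" for y
    using assms by (simp add: scaleR_matrix_vector_assoc[symmetric] ee_def power_mult_distrib)
  ultimately show ?thesis by simp
qed

lemma MM_eq: "(LINT y|lborel. (norm (y::real^'n))\<^sup>2 / 2 * ee y) = real CARD('n) / 2 * (LINT y|lborel. ee (y::real^'n))"
proof -
  define K where "K = (LINT y|lborel. ee (y::real^'n))"
  define M where "M = (LINT y|lborel. (norm (y::real^'n))\<^sup>2 / 2 * ee y)"
  define n where "n = real CARD('n)"
  define F where "F s = K * s powr (- (n / 2)) - K + (s - 1) * M" for s
  have Fge: "0 \<le> F s" if s: "0 < s" for s
  proof -
    have pt: "ee y - (s - 1) * ((norm y)\<^sup>2 / 2 * ee y) \<le> exp (- s * ((norm (y::real^'n))\<^sup>2 / 2))" for y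
    proof -
      define a where "a = (norm y)\<^sup>2 / 2"
      have "exp (- a) * (1 + (- (s - 1) * a)) \<le> exp (- a) * exp (- (s - 1) * a)"
        by (intro mult_left_mono exp_ge_add_one_self) auto
      also have "\<dots> = exp (- s * a)" by (subst mult_exp_exp) (simp add: algebra_simps)
      finally have f: "exp (- a) * (1 + (- (s - 1) * a)) \<le> exp (- s * a)" .
      have eq: "ee y - (s - 1) * ((norm y)\<^sup>2 / 2 * ee y) = exp (- a) * (1 + (- (s - 1) * a))"
        by (simp add: a_def ee_def field_simps)
      show ?thesis unfolding eq using f by (simp add: a_def)
    qed
    have i1: "integrable lborel (\<lambda>y::real^'n. (s - 1) * ((norm y)\<^sup>2 / 2 * ee y))"
      by (rule integrable_mult_right[OF quad_integrable])
    have "(LINT y|lborel. ee (y::real^'n) - (s - 1) * ((norm y)\<^sup>2 / 2 * ee y)) \<le> (LINT y|lborel. exp (- s * ((norm (y::real^'n))\<^sup>2 / 2)))"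
    proof (rule integral_mono)
      show "integrable lborel (\<lambda>y::real^'n. ee y - (s - 1) * ((norm y)\<^sup>2 / 2 * ee y))"
        using ee_integrable i1 by (rule Bochner_Integration.integrable_diff)
      show "integrable lborel (\<lambda>y::real^'n. exp (- s * ((norm y)\<^sup>2 / 2)))"
        using scal_integrable[OF s] .
    qed (rule pt)
    moreover have "(LINT y|lborel. ee (y::real^'n) - (s - 1) * ((norm y)\<^sup>2 / 2 * ee y)) = K - (s - 1) * M"
      unfolding K_def M_def by (subst Bochner_Integration.integral_diff[OF ee_integrable i1]) (simp only: integral_mult_right_zero)
    ultimately have "K - (s - 1) * M \<le> K / sqrt s ^ CARD('n)"
      using scal_integral[OF s, where 'n='n] by (simp add: K_def)
    moreover have "sqrt s ^ CARD('n) = s powr (n / 2)"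
      using s by (simp add: n_def powr_half_sqrt[symmetric] powr_realpow[symmetric] powr_powr)
    ultimately show ?thesis using s by (simp add: F_def powr_minus_divide algebra_simps)
  qed
  have F1: "F 1 = 0" by (simp add: F_def)
  have "DERIV F 1 :> K * (- (n / 2) * 1 powr (- (n / 2) - 1)) + M"
    unfolding F_def by (auto intro!: derivative_eq_intros has_real_derivative_powr)
  then have "K * (- (n / 2) * 1 powr (- (n / 2) - 1)) + M = 0"
  proof (rule DERIV_local_min[where d=1])
    show "\<forall>y. \<bar>1 - y\<bar> < 1 \<longrightarrow> F 1 \<le> F y" using Fge F1 by auto
  qed simp
  then show ?thesis by (simp add: K_def M_def n_def algebra_simps)
qed


(* part D *)


lemma minv: "invertible A \<Longrightarrow> A ** matrix_inv A = mat 1 \<and> matrix_inv A ** A = mat 1"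
  unfolding matrix_inv_def invertible_def by (rule someI_ex)

lemma gauss_ee: "gauss \<phi> x = ee (\<phi> *v x)" by (simp add: gauss_def ee_def)

lemma domf_gauss: "domf (gauss \<psi>) = UNIV" by (simp add: domf_def gauss_def)

lemma pot_gauss: "pot (gauss \<psi>) = (\<lambda>x. (norm (\<psi> *v x))\<^sup>2 / 2)"
  by (simp add: pot_def gauss_def fun_eq_iff)

lemma inner_transpose: "inner x (transpose A *v z) = inner ((A::real^'n^'n) *v x) z"
  by (metis dot_lmul_matrix inner_commute transpose_matrix_vector)

lemma inner_vmul: "inner x (z v* A) = inner ((A::real^'n^'n) *v x) z"
  using inner_transpose[of x A z] by simp

definition Ct :: "real^'n^'n \<Rightarrow> real^'n^'n" where "Ct \<psi> = transpose (matrix_inv \<psi>)"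

lemma Ct_props:
  assumes "invertible \<psi>"
  shows "transpose \<psi> ** Ct \<psi> = mat 1" "Ct \<psi> ** transpose \<psi> = mat 1"
  using minv[OF assms] unfolding Ct_def by (metis matrix_transpose_mul transpose_mat)+

lemma supp_gauss:
  assumes inv: "invertible \<psi>"
  shows "supp_fun (gauss \<psi>) y = (norm (Ct \<psi> *v y))\<^sup>2 / 2"
proof -
  define z where "z = Ct \<psi> *v y"
  have yz: "y = transpose \<psi> *v z"
    unfolding z_def by (simp add: matrix_vector_mul_assoc Ct_props[OF inv])
  have val: "inner x y - (norm (\<psi> *v x))\<^sup>2 / 2 = (norm z)\<^sup>2 / 2 - (norm (\<psi> *v x - z))\<^sup>2 / 2" for x
  proof -
    have "(norm (\<psi> *v x - z))\<^sup>2 = (norm (\<psi> *v x))\<^sup>2 - 2 * inner (\<psi> *v x) z + (norm z)\<^sup>2"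
      by (simp add: power2_norm_eq_inner inner_diff_left inner_diff_right inner_commute)
    moreover have "inner x y = inner (\<psi> *v x) z" by (simp add: yz inner_vmul)
    ultimately show ?thesis by (simp add: field_simps)
  qed
  obtain B where B: "\<psi> ** B = mat 1" using minv[OF inv] by blast
  have x0: "\<psi> *v (B *v z) = z" by (simp add: matrix_vector_mul_assoc B)
  have "supp_fun (gauss \<psi>) y = (SUP x\<in>UNIV. inner x y - (norm (\<psi> *v x))\<^sup>2 / 2)"
    by (simp add: supp_fun_def domf_gauss pot_gauss)
  also have "\<dots> = (norm z)\<^sup>2 / 2"
  proof (rule cSup_eq_maximum)
    show "(norm z)\<^sup>2 / 2 \<in> range (\<lambda>x. inner x y - (norm (\<psi> *v x))\<^sup>2 / 2)"
      using val[of "B *v z"] x0 by (auto intro!: image_eqI[where x="B *v z"])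
  next
    fix r assume "r \<in> range (\<lambda>x. inner x y - (norm (\<psi> *v x))\<^sup>2 / 2)"
    then show "r \<le> (norm z)\<^sup>2 / 2" using val by auto
  qed
  finally show ?thesis by (simp add: z_def)
qed

lemma grad_gauss: "grad_pot (gauss \<phi>) x = transpose \<phi> *v (\<phi> *v x)"
proof -
  have lin: "bounded_linear ((*v) \<phi>)" by (simp add: matrix_vector_mul_bounded_linear)
  have d: "GDERIV (pot (gauss \<phi>)) x :> transpose \<phi> *v (\<phi> *v x)"
  proof -
    have "((\<lambda>x. inner (\<phi> *v x) (\<phi> *v x) / 2) has_derivative
          (\<lambda>h. (inner (\<phi> *v h) (\<phi> *v x) + inner (\<phi> *v x) (\<phi> *v h)) / 2)) (at x)"
      by (auto intro!: derivative_eq_intros bounded_linear.has_derivative[OF lin])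
    moreover have "(\<lambda>h. (inner (\<phi> *v h) (\<phi> *v x) + inner (\<phi> *v x) (\<phi> *v h)) / 2) = (\<lambda>h. inner h (transpose \<phi> *v (\<phi> *v x)))"
      by (simp add: fun_eq_iff inner_vmul inner_commute)
    ultimately show ?thesis
      unfolding gderiv_def pot_gauss by (simp add: power2_norm_eq_inner)
  qed
  have u: "D = transpose \<phi> *v (\<phi> *v x)" if "GDERIV (pot (gauss \<phi>)) x :> D" for D
  proof -
    have "(\<lambda>h. inner h D) = (\<lambda>h. inner h (transpose \<phi> *v (\<phi> *v x)))"
      using has_derivative_unique that d unfolding gderiv_def by blast
    then have "inner (D - transpose \<phi> *v (\<phi> *v x)) D = inner (D - transpose \<phi> *v (\<phi> *v x)) (transpose \<phi> *v (\<phi> *v x))"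
      by metis
    then have "inner (D - transpose \<phi> *v (\<phi> *v x)) (D - transpose \<phi> *v (\<phi> *v x)) = 0"
      by (simp add: inner_diff_right)
    then show ?thesis by simp
  qed
  show ?thesis unfolding grad_pot_def using d u by (rule the_equality)
qed


(* part E *)


lemma bern:
  fixes p t :: real
  assumes p: "1 \<le> p" and t: "0 \<le> t"
  shows "1 + p * (t - 1) \<le> t powr p"
proof (cases "t = 0")
  case True
  then have "1 + p * (t - 1) = 1 - p" "t powr p = 0" using p by auto
  then show ?thesis using p by linarith
next
  case False
  then have tp: "0 < t" using t by simp
  have "(t powr p) powr (1 / p) * 1 powr (1 - 1 / p) \<le> (1 / p) * t powr p + (1 - 1 / p) * 1"
    using p tp by (intro Youngs_inequality_0) auto
  then have "t \<le> (1 / p) * t powr p + (1 - 1 / p)"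
    using p tp by (simp add: powr_powr)
  then have "p * t \<le> p * ((1 / p) * t powr p + (1 - 1 / p))"
    using p by (intro mult_left_mono) auto
  then show ?thesis using p by (simp add: algebra_simps)
qed

definition GG :: "real \<Rightarrow> real^'n^'n \<Rightarrow> real^'n \<Rightarrow> real" where
  "GG p B y = ((norm (B *v y))\<^sup>2 / 2) powr p * ((norm y)\<^sup>2 / 2) powr (1 - p) * ee y"

lemma mv_measurable[measurable]: "(\<lambda>x. (B::real^'n^'m) *v x) \<in> borel_measurable borel"
  by (intro borel_measurable_continuous_onI linear_continuous_on) (simp add: linear_linear)

lemma mv_measurable'[measurable]: "((*v) (B::real^'n^'m)) \<in> borel_measurable borel"
  using mv_measurable[of B] by (simp add: eta_contract_eq)

lemma GG_measurable[measurable]: "GG p B \<in> borel_measurable borel"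
  unfolding GG_def by measurable

lemma GG_alt:
  assumes "y \<noteq> 0"
  shows "GG p B y = ((norm y)\<^sup>2 / 2) * (((norm (B *v y))\<^sup>2 / 2) / ((norm y)\<^sup>2 / 2)) powr p * ee y"
proof -
  have a: "0 < (norm y)\<^sup>2 / 2" using assms by simp
  show ?thesis unfolding GG_def using a
    by (simp add: powr_divide powr_diff)
qed

lemma GG_zero: "0 < p \<Longrightarrow> GG p B 0 = 0" by (simp add: GG_def)

lemma GG_lower:
  assumes p: "1 \<le> p"
  shows "((norm y)\<^sup>2 / 2 + p * ((norm (B *v y))\<^sup>2 / 2 - (norm y)\<^sup>2 / 2)) * ee y \<le> GG p B y"
proof (cases "y = 0")
  case True then show ?thesis using p by (simp add: GG_zero)
next
  case False
  define a where "a = (norm y)\<^sup>2 / 2"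
  define b where "b = (norm (B *v y))\<^sup>2 / 2"
  have a: "0 < a" using False by (simp add: a_def)
  have b: "0 \<le> b" by (simp add: b_def)
  have "1 + p * (b / a - 1) \<le> (b / a) powr p" using bern[OF p] a b by simp
  then have "a * (1 + p * (b / a - 1)) \<le> a * (b / a) powr p" using a by (intro mult_left_mono) auto
  moreover have "a * (1 + p * (b / a - 1)) = a + p * (b - a)" using a by (simp add: field_simps)
  ultimately have "a + p * (b - a) \<le> a * (b / a) powr p" by simp
  then have X: "(a + p * (b - a)) * ee y \<le> a * (b / a) powr p * ee y"
    by (intro mult_right_mono) (auto intro: less_imp_le ee_pos)
  have Y: "GG p B y = a * (b / a) powr p * ee y" unfolding a_def b_def by (rule GG_alt[OF False])
  show ?thesis using X Y by (simp only: a_def b_def)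
qed

lemma GG_upper:
  assumes p: "1 \<le> p" and Kb: "\<And>y. norm (B *v y) \<le> norm y * Kb"
  shows "\<bar>GG p B y\<bar> \<le> (Kb\<^sup>2) powr p * ((norm y)\<^sup>2 / 2 * ee y)"
proof (cases "y = 0")
  case True then show ?thesis using p by (simp add: GG_zero ee_pos less_imp_le)
next
  case False
  define a where "a = (norm y)\<^sup>2 / 2"
  define b where "b = (norm (B *v y))\<^sup>2 / 2"
  have a: "0 < a" using False by (simp add: a_def)
  have b: "0 \<le> b" by (simp add: b_def)
  have "norm (B *v y) ^ 2 \<le> (norm y * Kb) ^ 2"
    by (intro power_mono Kb) auto
  then have "b \<le> Kb\<^sup>2 * a" unfolding a_def b_def by (simp add: power_mult_distrib mult.commute)
  then have ba: "b / a \<le> Kb\<^sup>2" using a by (simp add: divide_le_eq mult.commute)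
  have "(b / a) powr p \<le> (Kb\<^sup>2) powr p" using ba a b p by (intro powr_mono2) auto
  then have "a * (b / a) powr p * ee y \<le> a * (Kb\<^sup>2) powr p * ee y"
    using a by (intro mult_right_mono mult_left_mono) (auto intro: less_imp_le ee_pos)
  moreover have "0 \<le> a * (b / a) powr p * ee y" using a by (intro mult_nonneg_nonneg) (auto intro: less_imp_le ee_pos)
  moreover have Y: "GG p B y = a * (b / a) powr p * ee y" unfolding a_def b_def by (rule GG_alt[OF False])
  moreover have Z: "(norm y)\<^sup>2 / 2 = a" by (simp add: a_def)
  ultimately show ?thesis unfolding Z by (simp add: mult_ac)
qed


(* part F *)


lemma Bbound: obtains Kb where "\<And>y. norm ((B::real^'n^'n) *v y) \<le> norm y * Kb"
  using bounded_linear.pos_bounded[OF matrix_vector_mul_bounded_linear[of B]] by blast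

lemma T_integrable: "integrable lborel (\<lambda>y. (norm ((B::real^'n^'n) *v y))\<^sup>2 / 2 * ee y)"
proof -
  obtain Kb where Kb: "\<And>y. norm (B *v y) \<le> norm y * Kb" using Bbound by blast
  show ?thesis
  proof (rule quad_bounded_integrable[where C="Kb\<^sup>2"])
    fix y :: "real^'n"
    have "norm (B *v y) ^ 2 \<le> (norm y * Kb) ^ 2" by (intro power_mono Kb) auto
    then have A: "(norm (B *v y))\<^sup>2 / 2 \<le> Kb\<^sup>2 * ((norm y)\<^sup>2 / 2)"
      by (simp add: power_mult_distrib mult.commute)
    have "(norm (B *v y))\<^sup>2 / 2 * ee y \<le> Kb\<^sup>2 * ((norm y)\<^sup>2 / 2) * ee y"
      by (rule mult_right_mono[OF A]) (simp add: ee_pos less_imp_le)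
    then show "\<bar>(norm (B *v y))\<^sup>2 / 2 * ee y\<bar> \<le> Kb\<^sup>2 * ((norm y)\<^sup>2 / 2 * ee y)"
      by (simp add: abs_of_nonneg ee_pos less_imp_le)
  qed simp
qed

lemma GG_integrable: "1 \<le> p \<Longrightarrow> integrable lborel (GG p (B::real^'n^'n))"
proof -
  assume p: "1 \<le> p"
  obtain Kb where Kb: "\<And>y. norm (B *v y) \<le> norm y * Kb" using Bbound by blast
  show ?thesis
  proof (rule quad_bounded_integrable[where C="(Kb\<^sup>2) powr p"])
    show "\<bar>GG p B y\<bar> \<le> (Kb\<^sup>2) powr p * ((norm y)\<^sup>2 / 2 * ee y)" for y by (rule GG_upper[OF p Kb])
  qed simp
qed

lemma GG_ineq:
  assumes p: "1 \<le> p"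
  shows "(LINT y|lborel. (norm (y::real^'n))\<^sup>2 / 2 * ee y) + p * ((LINT y|lborel. (norm ((B::real^'n^'n) *v y))\<^sup>2 / 2 * ee y) - (LINT y|lborel. (norm (y::real^'n))\<^sup>2 / 2 * ee y))
     \<le> (LINT y|lborel. GG p B y)"
proof -
  let ?a = "\<lambda>y::real^'n. (norm y)\<^sup>2 / 2 * ee y"
  let ?b = "\<lambda>y::real^'n. (norm (B *v y))\<^sup>2 / 2 * ee y"
  have ia: "integrable lborel (\<lambda>y. (1 - p) * ?a y)" by (rule integrable_mult_right[OF quad_integrable])
  have ib: "integrable lborel (\<lambda>y. p * ?b y)" by (rule integrable_mult_right[OF T_integrable])
  have eq: "(LINT y|lborel. (1 - p) * ?a y + p * ?b y) = (LINT y|lborel. ?a y) + p * ((LINT y|lborel. ?b y) - (LINT y|lborel. ?a y))"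
  proof -
    have al: "(1 - p) * A + p * Bv = A + p * (Bv - A)" for A Bv :: real by (simp add: algebra_simps)
    have "(LINT y|lborel. (1 - p) * ?a y + p * ?b y) = (1 - p) * (LINT y|lborel. ?a y) + p * (LINT y|lborel. ?b y)"
      by (simp only: Bochner_Integration.integral_add[OF ia ib] integral_mult_right_zero)
    also have "\<dots> = (LINT y|lborel. ?a y) + p * ((LINT y|lborel. ?b y) - (LINT y|lborel. ?a y))" by (rule al)
    finally show ?thesis .
  qed
  have "(LINT y|lborel. (1 - p) * ?a y + p * ?b y) \<le> (LINT y|lborel. GG p B y)"
  proof (rule integral_mono)
    show "integrable lborel (\<lambda>y. (1 - p) * ?a y + p * ?b y)" using ia ib by (rule Bochner_Integration.integrable_add)
    show "integrable lborel (GG p B)" using GG_integrable[OF p] .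
    fix y :: "real^'n"
    have "(1 - p) * ?a y + p * ?b y = ((norm y)\<^sup>2 / 2 + p * ((norm (B *v y))\<^sup>2 / 2 - (norm y)\<^sup>2 / 2)) * ee y"
      by (simp add: field_simps)
    then show "(1 - p) * ?a y + p * ?b y \<le> GG p B y" using GG_lower[OF p] by simp
  qed
  then show ?thesis using eq by simp
qed

definition hh :: "real^'n^'n \<Rightarrow> real^'n \<Rightarrow> real" where
  "hh B y = ee (B *v y) - (ee y + (norm y)\<^sup>2 / 2 * ee y - (norm (B *v y))\<^sup>2 / 2 * ee y)"

lemma hh_nonneg: "0 \<le> hh B y"
proof -
  define a where "a = (norm y)\<^sup>2 / 2"
  define b where "b = (norm (B *v y))\<^sup>2 / 2"
  have "exp (- a) * (1 + (a - b)) \<le> exp (- a) * exp (a - b)"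
    by (intro mult_left_mono exp_ge_add_one_self) auto
  also have "\<dots> = exp (- b)" by (subst mult_exp_exp) simp
  finally have "exp (- a) * (1 + (a - b)) \<le> exp (- b)" .
  then show ?thesis unfolding hh_def ee_def a_def b_def by (simp add: algebra_simps)
qed

lemma hh_zero_imp: "hh B y = 0 \<Longrightarrow> norm (B *v y) = norm y"
proof -
  assume h: "hh B y = 0"
  define a where "a = (norm y)\<^sup>2 / 2"
  define b where "b = (norm (B *v y))\<^sup>2 / 2"
  have "exp (- a) * exp (a - b) = exp (- a) * (1 + (a - b))"
    using h unfolding hh_def ee_def a_def b_def by (subst mult_exp_exp) (simp add: algebra_simps)
  then have e: "exp (a - b) = 1 + (a - b)" by simp
  have "ln (exp (a - b)) = exp (a - b) - 1"
  proof -
    have "ln (exp (a - b)) = a - b" by (rule ln_exp)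
    also have "\<dots> = exp (a - b) - 1" using e by simp
    finally show ?thesis .
  qed
  then have "exp (a - b) = 1" by (intro ln_eq_minus_one) auto
  then have "a = b" by simp
  then have "(norm (B *v y))\<^sup>2 = (norm y)\<^sup>2" by (simp add: a_def b_def)
  then show ?thesis by (simp add: power2_eq_iff_nonneg)
qed

lemma ee_B_integral:
  assumes inv: "invertible (B::real^'n^'n)"
  shows "integrable lborel (\<lambda>y. ee (B *v y))" "(LINT y|lborel. ee (B *v y)) = (LINT y|lborel. ee (y::real^'n)) / \<bar>det (Mr B)\<bar>"
  using cov[OF inv ee_measurable] ee_integrable by auto

lemma hh_integral:
  assumes inv: "invertible (B::real^'n^'n)"
  shows "integrable lborel (hh B)"
    "(LINT y|lborel. hh B y) = (LINT y|lborel. ee (y::real^'n)) / \<bar>det (Mr B)\<bar> - ((LINT y|lborel. ee (y::real^'n)) + (LINT y|lborel. (norm (y::real^'n))\<^sup>2 / 2 * ee y) - (LINT y|lborel. (norm (B *v y))\<^sup>2 / 2 * ee y))"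
proof -
  have i2: "integrable lborel (\<lambda>y. ee y + (norm y)\<^sup>2 / 2 * ee y)"
    using ee_integrable quad_integrable by (rule Bochner_Integration.integrable_add)
  have i3: "integrable lborel (\<lambda>y. ee y + (norm y)\<^sup>2 / 2 * ee y - (norm (B *v y))\<^sup>2 / 2 * ee y)"
    using i2 T_integrable by (rule Bochner_Integration.integrable_diff)
  show "integrable lborel (hh B)" unfolding hh_def[abs_def]
    using ee_B_integral(1)[OF inv] i3 by (rule Bochner_Integration.integrable_diff)
  show "(LINT y|lborel. hh B y) = (LINT y|lborel. ee (y::real^'n)) / \<bar>det (Mr B)\<bar> - ((LINT y|lborel. ee (y::real^'n)) + (LINT y|lborel. (norm (y::real^'n))\<^sup>2 / 2 * ee y) - (LINT y|lborel. (norm (B *v y))\<^sup>2 / 2 * ee y))"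
    unfolding hh_def
    by (simp only: Bochner_Integration.integral_diff[OF ee_B_integral(1)[OF inv] i3]
          Bochner_Integration.integral_diff[OF i2 T_integrable]
          Bochner_Integration.integral_add[OF ee_integrable quad_integrable] ee_B_integral(2)[OF inv])
qed

lemma det_ineq:
  assumes inv: "invertible (B::real^'n^'n)"
  shows "(LINT y|lborel. ee (y::real^'n)) + (LINT y|lborel. (norm (y::real^'n))\<^sup>2 / 2 * ee y) - (LINT y|lborel. (norm (B *v y))\<^sup>2 / 2 * ee y)
     \<le> (LINT y|lborel. ee (y::real^'n)) / \<bar>det (Mr B)\<bar>"
proof -
  have "0 \<le> (LINT y|lborel. hh B y)" by (intro integral_nonneg_AE AE_I2 hh_nonneg)
  then show ?thesis using hh_integral(2)[OF inv] by linarith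
qed

lemma eq_case:
  assumes inv: "invertible (B::real^'n^'n)"
    and d: "(LINT y|lborel. ee (y::real^'n)) / \<bar>det (Mr B)\<bar> \<le> (LINT y|lborel. ee (y::real^'n))"
    and T: "(LINT y|lborel. (norm (B *v y))\<^sup>2 / 2 * ee y) \<le> (LINT y|lborel. (norm (y::real^'n))\<^sup>2 / 2 * ee y)"
  shows "norm (B *v y) = norm y"
proof (rule ccontr)
  assume ne: "norm (B *v y) \<noteq> norm y"
  have int0: "(LINT y|lborel. hh B y) = 0"
  proof -
    have "(LINT y|lborel. hh B y) \<le> 0" using hh_integral(2)[OF inv] d T by linarith
    moreover have "0 \<le> (LINT y|lborel. hh B y)" by (intro integral_nonneg_AE AE_I2 hh_nonneg)
    ultimately show ?thesis by simp
  qed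
  have hm[measurable]: "hh B \<in> borel_measurable borel" unfolding hh_def[abs_def] by measurable
  have AE0: "AE x in lborel. hh B x = 0"
    using integral_nonneg_eq_0_iff_AE[OF hh_integral(1)[OF inv]] int0 hh_nonneg by auto
  have cont: "continuous_on UNIV (hh B)"
    unfolding hh_def[abs_def] using cont_ee
    by (intro continuous_intros continuous_on_compose2[OF cont_ee]) (auto intro: linear_continuous_on simp: linear_linear)
  have "hh B y \<noteq> 0" using hh_zero_imp[of B y] ne by blast
  then have pos: "0 < hh B y" using hh_nonneg[of B y] by (simp add: less_le)
  obtain r where r: "0 < r" "\<And>z. z \<in> ball y r \<Longrightarrow> 0 < hh B z"
  proof -
    have "open {z. 0 < hh B z}"
      using open_Collect_less[of "\<lambda>_. 0" "hh B"] cont by (simp add: continuous_on_const)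
    then obtain r where "0 < r" "ball y r \<subseteq> {z. 0 < hh B z}" using pos unfolding open_contains_ball by blast
    then show ?thesis using that by blast
  qed
  have "AE x in lborel. x \<notin> ball y r" using AE0 by eventually_elim (use r in force)
  then have "emeasure lborel (ball y r) = 0"
    by (subst (asm) AE_iff_measurable[where N="ball y r"]) auto
  moreover have "measure lborel (ball y r) > 0" using content_ball_pos[OF r(1), of y] by simp
  ultimately show False by (simp add: measure_def)
qed


(* part G *)



lemma Jf_gauss: "invertible \<psi> \<Longrightarrow> Jf (gauss \<psi>) = (LINT y|lborel. ee (y::real^'n)) / \<bar>det (Mr (\<psi>::real^'n^'n))\<bar>"
  unfolding Jf_def gauss_ee by (rule cov(2)[OF _ ee_measurable])

lemma K_pos: "0 < (LINT y|lborel. ee (y::real^'n))"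
  by (simp add: ee_integral)

lemma set_int_UNIV: "(LINT x:UNIV|M. h x) = (LINT x|M. (h x :: real))"
  by (simp add: set_lebesgue_integral_def)

lemma Jdiamond_gauss:
  assumes inv: "invertible (\<phi>::real^'n^'n)"
  shows "Jdiamond (gauss \<phi>) = (LINT y|lborel. (norm (y::real^'n))\<^sup>2 / 2 * ee y) / \<bar>det (Mr \<phi>)\<bar>"
proof -
  define H where "H y = real CARD('n) * ee y - (norm y)\<^sup>2 / 2 * ee y" for y :: "real^'n"
  have Hm[measurable]: "H \<in> borel_measurable borel" unfolding H_def[abs_def] by measurable
  have pt: "real CARD('n) * gauss \<phi> x + gauss \<phi> x * ln (gauss \<phi> x) = H (\<phi> *v x)" for x
    by (simp add: gauss_ee H_def ee_def algebra_simps)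
  have "Jdiamond (gauss \<phi>) = (LINT x|lborel. H (\<phi> *v x))" unfolding Jdiamond_def pt ..
  also have "\<dots> = (LINT y|lborel. H y) / \<bar>det (Mr \<phi>)\<bar>" by (rule cov(2)[OF inv Hm])
  also have "(LINT y|lborel. H y) = real CARD('n) * (LINT y|lborel. ee (y::real^'n)) - (LINT y|lborel. (norm (y::real^'n))\<^sup>2 / 2 * ee y)"
    unfolding H_def
    by (simp only: Bochner_Integration.integral_diff[OF integrable_mult_right[OF ee_integrable] quad_integrable] integral_mult_right_zero)
  also have "\<dots> = (LINT y|lborel. (norm (y::real^'n))\<^sup>2 / 2 * ee y)"
    unfolding MM_eq by (simp add: field_simps)
  finally show ?thesis .
qed

lemma deltaJ_gauss:
  assumes invf: "invertible (\<phi>::real^'n^'n)" and invg: "invertible (\<psi>::real^'n^'n)"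
  shows "deltaJ p (gauss \<phi>) (gauss \<psi>) = (1 / p) * ((LINT y|lborel. GG p (Ct \<psi> ** transpose \<phi>) y) / \<bar>det (Mr \<phi>)\<bar>)"
proof -
  have a1: "Ct \<psi> *v (transpose \<phi> *v (\<phi> *v x)) = (Ct \<psi> ** transpose \<phi>) *v (\<phi> *v x)" for x
    by (rule matrix_vector_mul_assoc)
  have a2: "Ct \<phi> *v (transpose \<phi> *v (\<phi> *v x)) = \<phi> *v x" for x
    by (subst matrix_vector_mul_assoc) (simp only: Ct_props(2)[OF invf] matrix_vector_mul_lid)
  have pt: "(supp_fun (gauss \<psi>) (grad_pot (gauss \<phi>) x)) powr p * (supp_fun (gauss \<phi>) (grad_pot (gauss \<phi>) x)) powr (1 - p) * gauss \<phi> x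
      = GG p (Ct \<psi> ** transpose \<phi>) (\<phi> *v x)" for x
    unfolding grad_gauss supp_gauss[OF invf] supp_gauss[OF invg] a1 a2 GG_def gauss_ee ..
  have "deltaJ p (gauss \<phi>) (gauss \<psi>) = (1 / p) * (LINT x|lborel. GG p (Ct \<psi> ** transpose \<phi>) (\<phi> *v x))"
    unfolding deltaJ_def mu_int_def domf_gauss set_int_UNIV pt ..
  also have "\<dots> = (1 / p) * ((LINT y|lborel. GG p (Ct \<psi> ** transpose \<phi>) y) / \<bar>det (Mr \<phi>)\<bar>)"
    by (simp only: cov(2)[OF invf GG_measurable])
  finally show ?thesis .
qed


lemma GG_one: "1 \<le> p \<Longrightarrow> GG p (mat 1) y = (norm y)\<^sup>2 / 2 * ee y"
proof (cases "y = 0")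
  case True
  assume "1 \<le> p" then show ?thesis using True by (simp add: GG_def)
next
  case False
  then have a: "0 < (norm y)\<^sup>2 / 2" by simp
  have "((norm y)\<^sup>2 / 2) powr p * ((norm y)\<^sup>2 / 2) powr (1 - p) = ((norm y)\<^sup>2 / 2) powr (p + (1 - p))"
    by (rule powr_add[symmetric])
  also have "\<dots> = (norm y)\<^sup>2 / 2" using a by simp
  finally show ?thesis by (simp add: GG_def)
qed

lemma det_Ct: "invertible \<psi> \<Longrightarrow> det (Mr (Ct \<psi>)) * det (Mr \<psi>) = 1"
proof -
  assume inv: "invertible \<psi>"
  have "Mr (Ct \<psi>) ** transpose (Mr \<psi>) = mat 1"
    by (metis Ct_props(2)[OF inv] Mr_mult Mr_one Mr_transpose)
  then have "det (Mr (Ct \<psi>) ** transpose (Mr \<psi>)) = 1" by simp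
  then show ?thesis by (simp add: det_mul)
qed

lemma det_B:
  assumes "invertible \<phi>" "invertible \<psi>"
  shows "\<bar>det (Mr (Ct \<psi> ** transpose \<phi>))\<bar> = \<bar>det (Mr \<phi>)\<bar> / \<bar>det (Mr \<psi>)\<bar>"
proof -
  have e: "det (Mr (Ct \<psi> ** transpose \<phi>)) = det (Mr (Ct \<psi>)) * det (Mr \<phi>)"
    by (simp add: Mr_mult Mr_transpose det_mul)
  have "\<bar>det (Mr (Ct \<psi>))\<bar> * \<bar>det (Mr \<psi>)\<bar> = 1" using det_Ct[OF assms(2)] by (metis abs_mult abs_one)
  moreover have "\<bar>det (Mr \<psi>)\<bar> \<noteq> 0" using det_Ct[OF assms(2)] by auto
  ultimately have "\<bar>det (Mr (Ct \<psi>))\<bar> = 1 / \<bar>det (Mr \<psi>)\<bar>" by (simp add: field_simps)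
  then show ?thesis unfolding e abs_mult by simp
qed

lemma inv_B:
  fixes \<phi> \<psi> :: "real^'n^'n"
  assumes "invertible \<phi>" "invertible \<psi>"
  shows "invertible (Ct \<psi> ** transpose \<phi>)"
proof -
  have "det (Ct \<psi>) * det (transpose \<psi>) = 1"
    using Ct_props(2)[OF assms(2)] by (metis det_I det_mul)
  then have "det (Ct \<psi>) \<noteq> 0" by auto
  moreover have "det \<phi> \<noteq> 0" using assms(1) invertible_det_nz by blast
  ultimately show ?thesis by (simp add: invertible_det_nz det_mul)
qed

lemma det_Mr_nz: "invertible \<phi> \<Longrightarrow> det (Mr \<phi>) \<noteq> 0"
  using Mr_invertible invertible_det_nz by blast

lemma orth_finish:
  assumes invf: "invertible \<phi>" and invg: "invertible \<psi>"
    and n: "\<And>y. norm ((Ct \<psi> ** transpose \<phi>) *v y) = norm y"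
  shows "gauss \<psi> = gauss \<phi>"
proof -
  define B where "B = Ct \<psi> ** transpose \<phi>"
  have "orthogonal_transformation ((*v) B)"
    using n by (simp add: orthogonal_transformation B_def)
  then have "orthogonal_matrix B"
    using orthogonal_transformation_matrix[of "(*v) B"] by (simp add: matrix_of_matrix_vector_mul)
  then have "orthogonal_matrix (transpose B)" by simp
  then have "orthogonal_transformation ((*v) (transpose B))"
    using orthogonal_transformation_matrix[of "(*v) (transpose B)"] by (simp add: matrix_of_matrix_vector_mul)
  then have nt: "norm (transpose B *v z) = norm z" for z
    by (simp add: orthogonal_transformation)
  have tB: "transpose B = \<phi> ** matrix_inv \<psi>"
    by (simp add: B_def Ct_def matrix_transpose_mul)
  have "transpose B *v (\<psi> *v x) = \<phi> *v x" for x
  proof -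
    have "transpose B *v (\<psi> *v x) = \<phi> *v (matrix_inv \<psi> *v (\<psi> *v x))"
      unfolding tB by (simp only: matrix_vector_mul_assoc matrix_mul_assoc)
    also have "\<dots> = \<phi> *v x" using minv[OF invg] by (simp add: matrix_vector_mul_assoc)
    finally show ?thesis .
  qed
  then have "norm (\<psi> *v x) = norm (\<phi> *v x)" for x using nt by metis
  then show ?thesis by (simp add: gauss_def fun_eq_iff)
qed


theorem corollary3p10:
  fixes p :: real and \<phi> :: "real^'n^'n"
  assumes "p \<ge> 1" and "invertible \<phi>"
  shows "john_Lp p (gauss \<phi>) = gauss \<phi>"
proof -
  have p: "1 \<le> p" and invf: "invertible \<phi>" using assms by auto
  define K where "K = (LINT y|lborel. ee (y::real^'n))"
  define M where "M = (LINT y|lborel. (norm (y::real^'n))\<^sup>2 / 2 * ee y)"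
  define T where "T \<psi> = (LINT y|lborel. (norm ((Ct \<psi> ** transpose \<phi>) *v y))\<^sup>2 / 2 * ee (y::real^'n))" for \<psi>
  define dJ where "dJ \<psi> = (LINT y|lborel. GG p (Ct \<psi> ** transpose \<phi>) (y::real^'n))" for \<psi>
  define d where "d \<psi> = \<bar>det (Mr (\<psi>::real^'n^'n))\<bar>" for \<psi>
  have Kp: "0 < K" unfolding K_def by (rule K_pos)
  have MK: "M = real CARD('n) / 2 * K" unfolding M_def K_def by (rule MM_eq)
  have Mp: "0 < M" unfolding MK using Kp by simp
  have dp: "invertible \<psi> \<Longrightarrow> 0 < d \<psi>" for \<psi> using det_Mr_nz by (simp add: d_def)
  have Jf: "invertible \<psi> \<Longrightarrow> Jf (gauss \<psi>) = K / d \<psi>" for \<psi> by (simp add: Jf_gauss K_def d_def)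
  have dbar: "deltaJ_bar p (gauss \<phi>) (gauss \<psi>) = (dJ \<psi> / M) powr (1 / p)" if invg: "invertible \<psi>" for \<psi>
  proof -
    have "p * deltaJ p (gauss \<phi>) (gauss \<psi>) / Jdiamond (gauss \<phi>) = dJ \<psi> / M"
      unfolding deltaJ_gauss[OF invf invg] Jdiamond_gauss[OF invf] dJ_def[symmetric] M_def[symmetric]
      using p dp[OF invf] Mp by (simp add: d_def field_simps)
    then show ?thesis unfolding deltaJ_bar_def by simp
  qed
  have Ct1: "Ct \<phi> ** transpose \<phi> = mat 1" by (rule Ct_props(2)[OF invf])
  have self: "dJ \<phi> = M" unfolding dJ_def M_def Ct1 GG_one[OF p] ..
  have self_bar: "deltaJ_bar p (gauss \<phi>) (gauss \<phi>) = 1" using dbar[OF invf] self Mp by simp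
  have key: "d \<phi> \<le> d \<psi> \<and> (d \<psi> \<le> d \<phi> \<longrightarrow> gauss \<psi> = gauss \<phi>)"
    if invg: "invertible \<psi>" and le: "deltaJ_bar p (gauss \<phi>) (gauss \<psi>) \<le> 1" for \<psi>
  proof -
    have invB: "invertible (Ct \<psi> ** transpose \<phi>)" by (rule inv_B[OF invf invg])
    have "dJ \<psi> / M \<le> 1"
    proof (rule ccontr)
      assume "\<not> dJ \<psi> / M \<le> 1"
      then have "1 powr (1 / p) < (dJ \<psi> / M) powr (1 / p)" using p by (intro powr_less_mono2) auto
      then show False using le dbar[OF invg] by simp
    qed
    then have dJM: "dJ \<psi> \<le> M" using Mp by (simp add: divide_le_eq)
    have "M + p * (T \<psi> - M) \<le> dJ \<psi>" unfolding M_def T_def dJ_def by (rule GG_ineq[OF p])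
    then have "p * (T \<psi> - M) \<le> 0" using dJM by linarith
    then have TM: "T \<psi> \<le> M" using p by (simp add: mult_le_0_iff)
    have "K + M - T \<psi> \<le> K / \<bar>det (Mr (Ct \<psi> ** transpose \<phi>))\<bar>"
      unfolding K_def M_def T_def by (rule det_ineq[OF invB])
    then have "K \<le> K / (d \<phi> / d \<psi>)" using TM det_B[OF invf invg] by (simp add: d_def)
    then have "K \<le> K * d \<psi> / d \<phi>" by simp
    then have "K * d \<phi> \<le> K * d \<psi>" using dp[OF invf] by (simp add: le_divide_eq)
    then have dd: "d \<phi> \<le> d \<psi>" using Kp by simp
    moreover have "gauss \<psi> = gauss \<phi>" if "d \<psi> \<le> d \<phi>"
    proof (rule orth_finish[OF invf invg])
      have eqd: "d \<psi> = d \<phi>" using that dd by simp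
      have "\<bar>det (Mr (Ct \<psi> ** transpose \<phi>))\<bar> = 1"
        using det_B[OF invf invg] eqd dp[OF invf] by (simp add: d_def)
      then have d1: "(LINT y|lborel. ee (y::real^'n)) / \<bar>det (Mr (Ct \<psi> ** transpose \<phi>))\<bar> \<le> (LINT y|lborel. ee (y::real^'n))"
        by simp
      show "norm ((Ct \<psi> ** transpose \<phi>) *v y) = norm y" for y
        by (rule eq_case[OF invB d1]) (use TM in \<open>simp add: T_def M_def\<close>)
    qed
    ultimately show ?thesis by blast
  qed
  let ?P = "\<lambda>g. (\<exists>\<psi>. invertible \<psi> \<and> g = gauss \<psi>) \<and> deltaJ_bar p (gauss \<phi>) g \<le> 1
      \<and> (\<forall>\<psi>. invertible \<psi> \<and> deltaJ_bar p (gauss \<phi>) (gauss \<psi>) \<le> 1 \<longrightarrow> Jf (gauss \<psi>) \<le> Jf g)"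
  have Pf: "?P (gauss \<phi>)"
  proof (intro conjI allI impI)
    show "\<exists>\<psi>. invertible \<psi> \<and> gauss \<phi> = gauss \<psi>" using invf by blast
    show "deltaJ_bar p (gauss \<phi>) (gauss \<phi>) \<le> 1" using self_bar by simp
    fix \<psi> assume h: "invertible \<psi> \<and> deltaJ_bar p (gauss \<phi>) (gauss \<psi>) \<le> 1"
    then have "d \<phi> \<le> d \<psi>" using key by blast
    then show "Jf (gauss \<psi>) \<le> Jf (gauss \<phi>)"
    proof -
      have "K / d \<psi> \<le> K / d \<phi>"
        using \<open>d \<phi> \<le> d \<psi>\<close> Kp dp[OF invf] h by (intro divide_left_mono) (auto intro: mult_pos_pos dp)
      then show ?thesis using h Jf[of \<psi>] Jf[OF invf] by simp
    qed
  qed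
  have uniq: "g = gauss \<phi>" if P: "?P g" for g
  proof -
    have ex: "\<exists>\<psi>. invertible \<psi> \<and> g = gauss \<psi>" using P by (rule conjunct1)
    have leg: "deltaJ_bar p (gauss \<phi>) g \<le> 1" using P by (rule conjunct1[OF conjunct2])
    have all: "\<forall>\<psi>. invertible \<psi> \<and> deltaJ_bar p (gauss \<phi>) (gauss \<psi>) \<le> 1 \<longrightarrow> Jf (gauss \<psi>) \<le> Jf g"
      using P by (rule conjunct2[OF conjunct2])
    obtain \<psi> where invg: "invertible \<psi>" and g: "g = gauss \<psi>" using ex by blast
    have le: "deltaJ_bar p (gauss \<phi>) (gauss \<psi>) \<le> 1" using leg g by simp
    have mx: "Jf (gauss \<phi>) \<le> Jf g" using all[rule_format, of \<phi>] invf self_bar by simp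
    have kk: "K / d \<phi> \<le> K / d \<psi>" using mx g Jf[OF invf] Jf[OF invg] by simp
    have "d \<psi> \<le> d \<phi>"
    proof (rule ccontr)
      assume "\<not> d \<psi> \<le> d \<phi>"
      then have "K / d \<psi> < K / d \<phi>"
        using Kp dp[OF invf] dp[OF invg] by (intro divide_strict_left_mono) auto
      then show False using kk by simp
    qed
    then show ?thesis using key[OF invg le] g by blast
  qed
  show ?thesis unfolding john_Lp_def by (rule the_equality[of ?P, OF Pf uniq])
qed


end
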